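(* Let $X$ and $Y$ be independent random vectors in $\mathbb{R}^m$ and $\mathbb{R}^n$, and let $X_1,X_2,\dots$ and $Y_1,Y_2,\dots$ be independent random vectors (all mutually independent) with $\mathcal L(X_k)=\mathcal L(X)$ and $\mathcal L(Y_k)=\mathcal L(Y)$. For $N\in\mathbb{N}$, $s\in\mathbb{R}^m$, $t\in\mathbb{R}^n$ let $$Z_N(s,t)=\frac1N\sum_{k=1}^Ne^{i\langle s,X_k\rangle+i\langle t,Y_k\rangle}-\frac1{N^2}\sum_{k,l=1}^Ne^{i\langle s,X_k\rangle+i\langle t,Y_l\rangle}.$$ Then for all $s,s'\in\mathbb{R}^m$, $t,t'\in\mathbb{R}^n$, $$\mathbb{E}\big(Z_N(s,t)\overline{Z_N(s',t')}\big)=\frac{N-1}{N^2}\big(f_X(s-s')-f_X(s)\overline{f_X(s')}\big)\big(f_Y(t-t')-f_Y(t)\overline{f_Y(t')}\big),$$ where $f_X,f_Y$ are the characteristic functions of $X,Y$. *)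

theory Defs
  imports "HOL-Probability.Probability"
begin

definition charfun_vec :: "'a measure \<Rightarrow> ('a \<Rightarrow> 'b::euclidean_space) \<Rightarrow> 'b \<Rightarrow> complex" where
  "charfun_vec M V s = (LINT \<omega>|M. exp (\<i> * complex_of_real (s \<bullet> V \<omega>)))"

text \<open>Mutual independence of the whole family X_1, X_2, ..., Y_1, Y_2, ... (indices k >= 1),
  written out as in indep_vars_def2 (the two families have different value types, so the
  index set is a sum type).\<close>
definition mutually_indep_seqs ::
  "'a measure \<Rightarrow> (nat \<Rightarrow> 'a \<Rightarrow> 'm::euclidean_space) \<Rightarrow> (nat \<Rightarrow> 'a \<Rightarrow> 'n::euclidean_space) \<Rightarrow> bool" where
  "mutually_indep_seqs M Xs Ys \<longleftrightarrow>
     (\<forall>k\<ge>1. Xs k \<in> borel_measurable M) \<and> (\<forall>k\<ge>1. Ys k \<in> borel_measurable M) \<and>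
     prob_space.indep_sets M
       (\<lambda>i. case i of
              Inl k \<Rightarrow> {Xs k -` A \<inter> space M | A. A \<in> sets borel}
            | Inr k \<Rightarrow> {Ys k -` B \<inter> space M | B. B \<in> sets borel})
       (Inl ` {1..} \<union> Inr ` {1..})"

definition Z_N :: "(nat \<Rightarrow> 'a \<Rightarrow> 'm::euclidean_space) \<Rightarrow> (nat \<Rightarrow> 'a \<Rightarrow> 'n::euclidean_space) \<Rightarrow>
    nat \<Rightarrow> 'm \<Rightarrow> 'n \<Rightarrow> 'a \<Rightarrow> complex" where
  "Z_N Xs Ys N s t \<omega> =
     (1 / of_nat N) * (\<Sum>k=1..N. exp (\<i> * complex_of_real (s \<bullet> Xs k \<omega>) + \<i> * complex_of_real (t \<bullet> Ys k \<omega>)))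
   - (1 / of_nat N ^ 2) * (\<Sum>k=1..N. \<Sum>l=1..N. exp (\<i> * complex_of_real (s \<bullet> Xs k \<omega>) + \<i> * complex_of_real (t \<bullet> Ys l \<omega>)))"

end

theory Submission
  imports Defs
begin

context prob_space begin

lemma prod_indep:
  fixes Xs :: "nat \<Rightarrow> 'a \<Rightarrow> 'm::euclidean_space" and Ys :: "nat \<Rightarrow> 'a \<Rightarrow> 'n::euclidean_space"
  assumes ind: "mutually_indep_seqs M Xs Ys" and S: "finite S" "S \<subseteq> {1..}"
  shows "(LINT \<omega>|M. (\<Prod>j\<in>S. exp (\<i> * complex_of_real (\<sigma> j \<bullet> Xs j \<omega>))) *
                    (\<Prod>j\<in>S. exp (\<i> * complex_of_real (\<tau> j \<bullet> Ys j \<omega>)))) =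
    (\<Prod>j\<in>S. LINT \<omega>|M. exp (\<i> * complex_of_real (\<sigma> j \<bullet> Xs j \<omega>))) *
    (\<Prod>j\<in>S. LINT \<omega>|M. exp (\<i> * complex_of_real (\<tau> j \<bullet> Ys j \<omega>)))"
proof -
  define g where "g i \<omega> = (case i of Inl j \<Rightarrow> exp (\<i> * complex_of_real (\<sigma> j \<bullet> Xs j \<omega>))
      | Inr j \<Rightarrow> exp (\<i> * complex_of_real (\<tau> j \<bullet> Ys j \<omega>)))" for i \<omega>
  define J where "J = Inl ` S \<union> Inr ` S"
  have XM: "Xs j \<in> borel_measurable M" if "j \<in> S" for j
    using ind S that unfolding mutually_indep_seqs_def by auto
  have YM: "Ys j \<in> borel_measurable M" if "j \<in> S" for j
    using ind S that unfolding mutually_indep_seqs_def by auto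
  have gM: "g i \<in> borel_measurable M" if "i \<in> J" for i
    using that XM YM unfolding J_def g_def by auto
  have fin: "finite J" using S unfolding J_def by auto
  have indF: "indep_sets
       (\<lambda>i. case i of
              Inl k \<Rightarrow> {Xs k -` A \<inter> space M | A. A \<in> sets borel}
            | Inr k \<Rightarrow> {Ys k -` B \<inter> space M | B. B \<in> sets borel}) J"
    apply (rule indep_sets_mono_index[of _ "Inl ` {1..} \<union> Inr ` {1..}"])
    using S ind unfolding J_def mutually_indep_seqs_def by auto
  have iv: "indep_vars (\<lambda>_. borel) g J"
    unfolding indep_vars_def2
  proof safe
    fix i assume "i \<in> J" thus "random_variable borel (g i)" using gM by simp
  next
    show "indep_sets (\<lambda>i. {g i -` A \<inter> space M |A. A \<in> sets borel}) J"
    proof (rule indep_sets_mono_sets[OF indF])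
      fix i assume "i \<in> J"
      show "{g i -` A \<inter> space M |A. A \<in> sets borel} \<subseteq>
        (case i of Inl k \<Rightarrow> {Xs k -` A \<inter> space M |A. A \<in> sets borel}
            | Inr k \<Rightarrow> {Ys k -` B \<inter> space M |B. B \<in> sets borel})"
      proof (cases i)
        case (Inl j)
        have m: "(\<lambda>x::'m. exp (\<i> * complex_of_real (\<sigma> j \<bullet> x))) \<in> borel_measurable borel" by measurable
        show ?thesis
        proof (clarsimp simp: Inl)
          fix A :: "complex set" assume A: "A \<in> sets borel"
          show "\<exists>B. g (Inl j) -` A \<inter> space M = Xs j -` B \<inter> space M \<and> B \<in> sets borel"
            by (rule exI[of _ "(\<lambda>x::'m. exp (\<i> * complex_of_real (\<sigma> j \<bullet> x))) -` A"])
               (use measurable_sets_borel[OF m A] in \<open>auto simp: g_def Inl\<close>)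
        qed
      next
        case (Inr j)
        have m: "(\<lambda>x::'n. exp (\<i> * complex_of_real (\<tau> j \<bullet> x))) \<in> borel_measurable borel" by measurable
        show ?thesis
        proof (clarsimp simp: Inr)
          fix A :: "complex set" assume A: "A \<in> sets borel"
          show "\<exists>B. g (Inr j) -` A \<inter> space M = Ys j -` B \<inter> space M \<and> B \<in> sets borel"
            by (rule exI[of _ "(\<lambda>x::'n. exp (\<i> * complex_of_real (\<tau> j \<bullet> x))) -` A"])
               (use measurable_sets_borel[OF m A] in \<open>auto simp: g_def Inr\<close>)
        qed
      qed
    qed
  qed
  have intg: "integrable M (g i)" if "i \<in> J" for i
    by (rule integrable_const_bound[where B=1]) (auto simp: g_def gM[OF that] norm_exp_i_times split: sum.split)
  have prodsplit: "(\<Prod>i\<in>J. h i) = (\<Prod>j\<in>S. h (Inl j)) * (\<Prod>j\<in>S. h (Inr j))" for h :: "_ \<Rightarrow> complex"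
    unfolding J_def using S
    by (subst prod.union_disjoint) (auto simp: prod.reindex)
  have "(LINT \<omega>|M. (\<Prod>i\<in>J. g i \<omega>)) = (\<Prod>i\<in>J. LINT \<omega>|M. g i \<omega>)"
    by (rule indep_vars_lebesgue_integral[OF fin iv intg])
  moreover have "g (Inl j) = (\<lambda>\<omega>. exp (\<i> * complex_of_real (\<sigma> j \<bullet> Xs j \<omega>)))" for j
    by (simp add: g_def fun_eq_iff)
  moreover have "g (Inr j) = (\<lambda>\<omega>. exp (\<i> * complex_of_real (\<tau> j \<bullet> Ys j \<omega>)))" for j
    by (simp add: g_def fun_eq_iff)
  ultimately show ?thesis unfolding prodsplit by (simp add: g_def)
qed

end

lemma borel_measurable_cnj_my[measurable (raw)]:
  "f \<in> borel_measurable M \<Longrightarrow> (\<lambda>x. cnj (f x)) \<in> borel_measurable M"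
  by (rule measurable_compose[OF _ borel_measurable_continuous_onI]) (auto intro: continuous_intros)

definition alpha :: "nat \<Rightarrow> nat \<Rightarrow> nat \<Rightarrow> complex" where
  "alpha N k l = (if k = l then 1 / of_nat N else 0) - 1 / of_nat N ^ 2"

lemma sum_if_eq:
  fixes A B :: complex
  assumes "finite S" "k \<in> S"
  shows "(\<Sum>l\<in>S. if k = l then A else B) = A + (of_nat (card S) - 1) * B"
proof -
  have "(\<Sum>l\<in>S. if k = l then A else B) = (\<Sum>l\<in>S. B + (if k = l then A - B else 0))"
    by (intro sum.cong) auto
  also have "\<dots> = of_nat (card S) * B + (A - B)"
    using assms by (simp add: sum.distrib)
  finally show ?thesis by (simp add: algebra_simps)
qed

lemma alpha_sum1: "N > 0 \<Longrightarrow> l \<in> {1..N} \<Longrightarrow> (\<Sum>k\<in>{1..N}. alpha N k l) = 0"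
  unfolding alpha_def by (simp add: sum_subtractf power2_eq_square)

lemma alpha_sum2: "N > 0 \<Longrightarrow> k \<in> {1..N} \<Longrightarrow> (\<Sum>l\<in>{1..N}. alpha N k l) = 0"
  unfolding alpha_def by (simp add: sum_subtractf power2_eq_square)

lemma alg:
  fixes p1 p0 q1 q0 :: complex
  assumes N: "N > 0"
  shows "(\<Sum>k\<in>{1..N}. \<Sum>l\<in>{1..N}. \<Sum>k'\<in>{1..N}. \<Sum>l'\<in>{1..N}.
      alpha N k l * alpha N k' l' * ((if k = k' then p1 else p0) * (if l = l' then q1 else q0)))
    = of_nat (N - 1) / of_nat N ^ 2 * (p1 - p0) * (q1 - q0)"
proof -
  let ?S = "{1..N}"
  have i1: "(\<Sum>l'\<in>?S. alpha N k' l' * (if l = l' then q1 else q0)) = alpha N k' l * (q1 - q0)"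
    if "k' \<in> ?S" "l \<in> ?S" for k' l
  proof -
    have "(\<Sum>l'\<in>?S. alpha N k' l' * (if l = l' then q1 else q0))
        = (\<Sum>l'\<in>?S. q0 * alpha N k' l' + (if l = l' then alpha N k' l' * (q1 - q0) else 0))"
      by (intro sum.cong) (auto simp: algebra_simps)
    also have "\<dots> = q0 * (\<Sum>l'\<in>?S. alpha N k' l') + alpha N k' l * (q1 - q0)"
      using that by (simp add: sum.distrib sum_distrib_left)
    finally show ?thesis using alpha_sum2[OF N that(1)] by simp
  qed
  have i2: "(\<Sum>k'\<in>?S. alpha N k' l * (if k = k' then p1 else p0)) = alpha N k l * (p1 - p0)"
    if "k \<in> ?S" "l \<in> ?S" for k l
  proof -
    have "(\<Sum>k'\<in>?S. alpha N k' l * (if k = k' then p1 else p0))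
        = (\<Sum>k'\<in>?S. p0 * alpha N k' l + (if k = k' then alpha N k' l * (p1 - p0) else 0))"
      by (intro sum.cong) (auto simp: algebra_simps)
    also have "\<dots> = p0 * (\<Sum>k'\<in>?S. alpha N k' l) + alpha N k l * (p1 - p0)"
      using that by (simp add: sum.distrib sum_distrib_left)
    finally show ?thesis using alpha_sum1[OF N that(2)] by simp
  qed
  have "(\<Sum>k\<in>?S. \<Sum>l\<in>?S. \<Sum>k'\<in>?S. \<Sum>l'\<in>?S.
      alpha N k l * alpha N k' l' * ((if k = k' then p1 else p0) * (if l = l' then q1 else q0)))
    = (\<Sum>k\<in>?S. \<Sum>l\<in>?S. \<Sum>k'\<in>?S. alpha N k l * (if k = k' then p1 else p0) *
         (\<Sum>l'\<in>?S. alpha N k' l' * (if l = l' then q1 else q0)))"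
    by (simp add: sum_distrib_left mult_ac)
  also have "\<dots> = (\<Sum>k\<in>?S. \<Sum>l\<in>?S. \<Sum>k'\<in>?S. alpha N k l * (if k = k' then p1 else p0) *
         (alpha N k' l * (q1 - q0)))"
    by (intro sum.cong refl) (simp only: i1)
  also have "\<dots> = (\<Sum>k\<in>?S. \<Sum>l\<in>?S. alpha N k l * (q1 - q0) *
         (\<Sum>k'\<in>?S. alpha N k' l * (if k = k' then p1 else p0)))"
    by (simp add: sum_distrib_left mult_ac)
  also have "\<dots> = (\<Sum>k\<in>?S. \<Sum>l\<in>?S. alpha N k l * (q1 - q0) * (alpha N k l * (p1 - p0)))"
    by (intro sum.cong refl) (simp only: i2)
  also have "\<dots> = (p1 - p0) * (q1 - q0) * (\<Sum>k\<in>?S. \<Sum>l\<in>?S. alpha N k l ^ 2)"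
    by (simp add: sum_distrib_left power2_eq_square mult_ac)
  also have "(\<Sum>k\<in>?S. \<Sum>l\<in>?S. alpha N k l ^ 2) = of_nat (N - 1) / of_nat N ^ 2"
  proof -
    have "(\<Sum>l\<in>?S. alpha N k l ^ 2) = (1 / of_nat N - 1 / of_nat N ^ 2) ^ 2
         + (of_nat N - 1) * (1 / of_nat N ^ 2) ^ 2" if "k \<in> ?S" for k
    proof -
      have "(\<Sum>l\<in>?S. alpha N k l ^ 2) = (\<Sum>l\<in>?S. if k = l then (1 / of_nat N - 1 / of_nat N ^ 2) ^ 2 else (1 / of_nat N ^ 2) ^ 2)"
        by (intro sum.cong) (auto simp: alpha_def)
      thus ?thesis using sum_if_eq[of ?S k "(1 / of_nat N - 1 / of_nat N ^ 2) ^ 2" "(1 / of_nat N ^ 2) ^ 2"] that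
        by simp
    qed
    hence "(\<Sum>k\<in>?S. \<Sum>l\<in>?S. alpha N k l ^ 2) = of_nat N * ((1 / of_nat N - 1 / of_nat N ^ 2) ^ 2
         + (of_nat N - 1) * (1 / of_nat N ^ 2) ^ 2)" by simp
    also have "\<dots> = of_nat (N - 1) / of_nat N ^ 2"
      using N by (simp add: of_nat_diff field_simps power2_eq_square)
    finally show ?thesis .
  qed
  finally show ?thesis by (simp add: mult_ac)
qed


lemma prod_two:
  fixes F :: "'b::real_vector \<Rightarrow> complex"
  assumes "finite S" "k \<in> S" "k' \<in> S" "F 0 = 1"
  shows "(\<Prod>j\<in>S. F ((if j = k then s else 0) - (if j = k' then s' else 0))) =
    (if k = k' then F (s - s') else F s * F (- s'))"
proof -
  have "(\<Prod>j\<in>S. F ((if j = k then s else 0) - (if j = k' then s' else 0))) =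
        (\<Prod>j\<in>{k,k'}. F ((if j = k then s else 0) - (if j = k' then s' else 0)))"
    using assms by (intro prod.mono_neutral_right) auto
  thus ?thesis by (cases "k = k'") auto
qed

lemma charfun_vec_0: "prob_space M \<Longrightarrow> charfun_vec M V 0 = 1"
  unfolding charfun_vec_def by (simp add: prob_space.prob_space)

lemma charfun_vec_neg: "charfun_vec M V (- s) = cnj (charfun_vec M V s)"
proof -
  have "cnj (charfun_vec M V s) = (LINT \<omega>|M. cnj (exp (\<i> * complex_of_real (s \<bullet> V \<omega>))))"
    unfolding charfun_vec_def by (rule Bochner_Integration.integral_cnj[symmetric])
  also have "\<dots> = charfun_vec M V (- s)"
    unfolding charfun_vec_def by (intro Bochner_Integration.integral_cong refl) (simp add: exp_cnj)
  finally show ?thesis ..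
qed

lemma cnj_alpha[simp]: "cnj (alpha N k l) = alpha N k l"
  by (simp add: alpha_def)

lemma Z_expand: "Z_N Xs Ys N s t \<omega> = (\<Sum>k\<in>{1..N}. \<Sum>l\<in>{1..N}. alpha N k l *
    (exp (\<i> * complex_of_real (s \<bullet> Xs k \<omega>)) * exp (\<i> * complex_of_real (t \<bullet> Ys l \<omega>))))"
proof -
  have "(\<Sum>k\<in>{1..N}. \<Sum>l\<in>{1..N}. alpha N k l *
    (exp (\<i> * complex_of_real (s \<bullet> Xs k \<omega>)) * exp (\<i> * complex_of_real (t \<bullet> Ys l \<omega>))))
   = (\<Sum>k\<in>{1..N}. \<Sum>l\<in>{1..N}. (if k = l then 1 / of_nat N * (exp (\<i> * complex_of_real (s \<bullet> Xs k \<omega>)) * exp (\<i> * complex_of_real (t \<bullet> Ys l \<omega>))) else 0)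
      - 1 / of_nat N ^ 2 * (exp (\<i> * complex_of_real (s \<bullet> Xs k \<omega>)) * exp (\<i> * complex_of_real (t \<bullet> Ys l \<omega>))))"
    by (intro sum.cong refl) (auto simp: alpha_def algebra_simps)
  also have "\<dots> = Z_N Xs Ys N s t \<omega>"
    unfolding Z_N_def by (simp add: sum_subtractf sum_distrib_left exp_add)
  finally show ?thesis ..
qed

theorem lemma4p6:
  fixes M :: "'a measure"
    and X :: "'a \<Rightarrow> 'm::euclidean_space" and Y :: "'a \<Rightarrow> 'n::euclidean_space"
    and Xs :: "nat \<Rightarrow> 'a \<Rightarrow> 'm" and Ys :: "nat \<Rightarrow> 'a \<Rightarrow> 'n"
    and N :: nat and s s' :: 'm and t t' :: 'n
  assumes "prob_space M"
    and "X \<in> borel_measurable M" and "Y \<in> borel_measurable M"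
    and "prob_space.indep_set M {X -` A \<inter> space M | A. A \<in> sets borel}
                              {Y -` B \<inter> space M | B. B \<in> sets borel}"
    and "mutually_indep_seqs M Xs Ys"
    and "\<And>k. k \<ge> 1 \<Longrightarrow> distr M borel (Xs k) = distr M borel X"
    and "\<And>k. k \<ge> 1 \<Longrightarrow> distr M borel (Ys k) = distr M borel Y"
  shows "(LINT \<omega>|M. Z_N Xs Ys N s t \<omega> * cnj (Z_N Xs Ys N s' t' \<omega>)) =
    (of_nat (N - 1) / of_nat N ^ 2) *
      (charfun_vec M X (s - s') - charfun_vec M X s * cnj (charfun_vec M X s')) *
      (charfun_vec M Y (t - t') - charfun_vec M Y t * cnj (charfun_vec M Y t'))"
proof -
  interpret P: prob_space M by fact
  note ind = assms(5)
  have XM: "Xs k \<in> borel_measurable M" if "k \<ge> 1" for k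
    using ind that unfolding mutually_indep_seqs_def by auto
  have YM: "Ys k \<in> borel_measurable M" if "k \<ge> 1" for k
    using ind that unfolding mutually_indep_seqs_def by auto
  have fX: "(LINT \<omega>|M. exp (\<i> * complex_of_real (\<sigma> \<bullet> Xs k \<omega>))) = charfun_vec M X \<sigma>"
    if "k \<ge> 1" for k \<sigma>
  proof -
    have m: "(\<lambda>x::'m. exp (\<i> * complex_of_real (\<sigma> \<bullet> x))) \<in> borel_measurable borel" by measurable
    have "(LINT \<omega>|M. exp (\<i> * complex_of_real (\<sigma> \<bullet> Xs k \<omega>))) =
          (LINT x|distr M borel (Xs k). exp (\<i> * complex_of_real (\<sigma> \<bullet> x)))"
      by (rule integral_distr[OF XM[OF that] m, symmetric])
    also have "\<dots> = (LINT x|distr M borel X. exp (\<i> * complex_of_real (\<sigma> \<bullet> x)))"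
      using assms(6)[OF that] by simp
    also have "\<dots> = charfun_vec M X \<sigma>"
      unfolding charfun_vec_def by (rule integral_distr[OF assms(2) m])
    finally show ?thesis .
  qed
  have fY: "(LINT \<omega>|M. exp (\<i> * complex_of_real (\<tau> \<bullet> Ys k \<omega>))) = charfun_vec M Y \<tau>"
    if "k \<ge> 1" for k \<tau>
  proof -
    have m: "(\<lambda>x::'n. exp (\<i> * complex_of_real (\<tau> \<bullet> x))) \<in> borel_measurable borel" by measurable
    have "(LINT \<omega>|M. exp (\<i> * complex_of_real (\<tau> \<bullet> Ys k \<omega>))) =
          (LINT x|distr M borel (Ys k). exp (\<i> * complex_of_real (\<tau> \<bullet> x)))"
      by (rule integral_distr[OF YM[OF that] m, symmetric])
    also have "\<dots> = (LINT x|distr M borel Y. exp (\<i> * complex_of_real (\<tau> \<bullet> x)))"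
      using assms(7)[OF that] by simp
    also have "\<dots> = charfun_vec M Y \<tau>"
      unfolding charfun_vec_def by (rule integral_distr[OF assms(3) m])
    finally show ?thesis .
  qed
  show ?thesis
  proof (cases "N = 0")
    case True
    thus ?thesis by (simp add: Z_N_def)
  next
    case False
    hence N: "N > 0" by simp
    let ?S = "{1..N}"
    define T where "T k l k' l' \<omega> =
      exp (\<i> * complex_of_real (s \<bullet> Xs k \<omega>)) * exp (\<i> * complex_of_real (t \<bullet> Ys l \<omega>)) *
      cnj (exp (\<i> * complex_of_real (s' \<bullet> Xs k' \<omega>))) * cnj (exp (\<i> * complex_of_real (t' \<bullet> Ys l' \<omega>)))"
      for k l k' l' \<omega>
    have prodeq: "Z_N Xs Ys N s t \<omega> * cnj (Z_N Xs Ys N s' t' \<omega>) =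
      (\<Sum>k\<in>?S. \<Sum>l\<in>?S. \<Sum>k'\<in>?S. \<Sum>l'\<in>?S. alpha N k l * alpha N k' l' * T k l k' l' \<omega>)" for \<omega>
    proof -
      have "Z_N Xs Ys N s t \<omega> * cnj (Z_N Xs Ys N s' t' \<omega>) =
        (\<Sum>k\<in>?S. \<Sum>k'\<in>?S. \<Sum>l\<in>?S. \<Sum>l'\<in>?S. alpha N k l * alpha N k' l' * T k l k' l' \<omega>)"
        unfolding Z_expand T_def by (simp add: sum_product mult_ac)
      also have "\<dots> = (\<Sum>k\<in>?S. \<Sum>l\<in>?S. \<Sum>k'\<in>?S. \<Sum>l'\<in>?S. alpha N k l * alpha N k' l' * T k l k' l' \<omega>)"
        by (rule sum.cong[OF refl], rule sum.swap)
      finally show ?thesis .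
    qed
    have Tint: "integrable M (T k l k' l')" if "k \<in> ?S" "l \<in> ?S" "k' \<in> ?S" "l' \<in> ?S" for k l k' l'
    proof (rule P.integrable_const_bound[where B=1])
      show "AE x in M. norm (T k l k' l' x) \<le> 1"
        by (simp add: T_def norm_mult norm_exp_i_times exp_cnj)
      show "T k l k' l' \<in> borel_measurable M"
      proof -
        have [measurable]: "Xs k \<in> borel_measurable M" "Xs k' \<in> borel_measurable M"
          "Ys l \<in> borel_measurable M" "Ys l' \<in> borel_measurable M"
          using XM YM that by auto
        show ?thesis unfolding T_def by measurable
      qed
    qed
    have Tval: "(LINT \<omega>|M. T k l k' l' \<omega>) =
        (if k = k' then charfun_vec M X (s - s') else charfun_vec M X s * cnj (charfun_vec M X s')) *
        (if l = l' then charfun_vec M Y (t - t') else charfun_vec M Y t * cnj (charfun_vec M Y t'))"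
      if kl: "k \<in> ?S" "l \<in> ?S" "k' \<in> ?S" "l' \<in> ?S" for k l k' l'
    proof -
      define \<sigma> where "\<sigma> j = (if j = k then s else 0) - (if j = k' then s' else 0)" for j
      define \<tau> where "\<tau> j = (if j = l then t else 0) - (if j = l' then t' else 0)" for j
      have sx: "(\<Sum>j\<in>?S. \<sigma> j \<bullet> Xs j \<omega>) = s \<bullet> Xs k \<omega> - s' \<bullet> Xs k' \<omega>" for \<omega>
        using kl unfolding \<sigma>_def by (simp add: inner_diff_left if_distrib[of "\<lambda>v. v \<bullet> _"] sum_subtractf cong: if_cong)
      have ty: "(\<Sum>j\<in>?S. \<tau> j \<bullet> Ys j \<omega>) = t \<bullet> Ys l \<omega> - t' \<bullet> Ys l' \<omega>" for \<omega>
        using kl unfolding \<tau>_def by (simp add: inner_diff_left if_distrib[of "\<lambda>v. v \<bullet> _"] sum_subtractf cong: if_cong)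
      have pe: "(\<Prod>j\<in>?S. exp (\<i> * complex_of_real (\<sigma> j \<bullet> Xs j \<omega>))) =
             exp (\<i> * complex_of_real (s \<bullet> Xs k \<omega> - s' \<bullet> Xs k' \<omega>))" for \<omega>
        by (simp add: exp_sum[symmetric] sum_distrib_left[symmetric] sx[symmetric])
      have pf: "(\<Prod>j\<in>?S. exp (\<i> * complex_of_real (\<tau> j \<bullet> Ys j \<omega>))) =
             exp (\<i> * complex_of_real (t \<bullet> Ys l \<omega> - t' \<bullet> Ys l' \<omega>))" for \<omega>
        by (simp add: exp_sum[symmetric] sum_distrib_left[symmetric] ty[symmetric])
      have "T k l k' l' \<omega> = (\<Prod>j\<in>?S. exp (\<i> * complex_of_real (\<sigma> j \<bullet> Xs j \<omega>))) *
                            (\<Prod>j\<in>?S. exp (\<i> * complex_of_real (\<tau> j \<bullet> Ys j \<omega>)))" for \<omega>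
        unfolding pe pf T_def by (simp add: exp_cnj exp_diff exp_add exp_minus divide_inverse algebra_simps)
      hence "(LINT \<omega>|M. T k l k' l' \<omega>) = (LINT \<omega>|M. (\<Prod>j\<in>?S. exp (\<i> * complex_of_real (\<sigma> j \<bullet> Xs j \<omega>))) *
                            (\<Prod>j\<in>?S. exp (\<i> * complex_of_real (\<tau> j \<bullet> Ys j \<omega>))))" by simp
      also have "\<dots> = (\<Prod>j\<in>?S. LINT \<omega>|M. exp (\<i> * complex_of_real (\<sigma> j \<bullet> Xs j \<omega>))) *
          (\<Prod>j\<in>?S. LINT \<omega>|M. exp (\<i> * complex_of_real (\<tau> j \<bullet> Ys j \<omega>)))"
        by (rule P.prod_indep[OF ind]) auto
      also have "\<dots> = (\<Prod>j\<in>?S. charfun_vec M X (\<sigma> j)) * (\<Prod>j\<in>?S. charfun_vec M Y (\<tau> j))"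
        using fX fY by simp
      also have "\<dots> = (if k = k' then charfun_vec M X (s - s') else charfun_vec M X s * charfun_vec M X (- s')) *
          (if l = l' then charfun_vec M Y (t - t') else charfun_vec M Y t * charfun_vec M Y (- t'))"
      proof -
        have "(\<Prod>j\<in>?S. charfun_vec M X (\<sigma> j)) = (if k = k' then charfun_vec M X (s - s') else charfun_vec M X s * charfun_vec M X (- s'))"
          unfolding \<sigma>_def by (rule prod_two) (use kl charfun_vec_0[OF assms(1)] in auto)
        moreover have "(\<Prod>j\<in>?S. charfun_vec M Y (\<tau> j)) = (if l = l' then charfun_vec M Y (t - t') else charfun_vec M Y t * charfun_vec M Y (- t'))"
          unfolding \<tau>_def by (rule prod_two) (use kl charfun_vec_0[OF assms(1)] in auto)
        ultimately show ?thesis by simp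
      qed
      finally show ?thesis by (simp add: charfun_vec_neg)
    qed
    have "(LINT \<omega>|M. Z_N Xs Ys N s t \<omega> * cnj (Z_N Xs Ys N s' t' \<omega>)) =
      (LINT \<omega>|M. (\<Sum>k\<in>?S. \<Sum>l\<in>?S. \<Sum>k'\<in>?S. \<Sum>l'\<in>?S. alpha N k l * alpha N k' l' * T k l k' l' \<omega>))"
      by (simp only: prodeq)
    also have "\<dots> = (\<Sum>k\<in>?S. \<Sum>l\<in>?S. \<Sum>k'\<in>?S. \<Sum>l'\<in>?S. alpha N k l * alpha N k' l' * (LINT \<omega>|M. T k l k' l' \<omega>))"
    proof -
      have Ti2: "integrable M (\<lambda>\<omega>. alpha N k l * alpha N k' l' * T k l k' l' \<omega>)"
        if "k \<in> ?S" "l \<in> ?S" "k' \<in> ?S" "l' \<in> ?S" for k l k' l'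
        using Tint[OF that] by (rule integrable_mult_right)
      show ?thesis
        apply (subst Bochner_Integration.integral_sum)
         apply (intro Bochner_Integration.integrable_sum Ti2; assumption)
        apply (rule sum.cong[OF refl])
        apply (subst Bochner_Integration.integral_sum)
         apply (intro Bochner_Integration.integrable_sum Ti2; assumption)
        apply (rule sum.cong[OF refl])
        apply (subst Bochner_Integration.integral_sum)
         apply (intro Bochner_Integration.integrable_sum Ti2; assumption)
        apply (rule sum.cong[OF refl])
        apply (subst Bochner_Integration.integral_sum)
         apply (intro Bochner_Integration.integrable_sum Ti2; assumption)
        apply (rule sum.cong[OF refl])
        apply (rule integral_mult_right_zero)
        done
    qed
    also have "\<dots> = (\<Sum>k\<in>?S. \<Sum>l\<in>?S. \<Sum>k'\<in>?S. \<Sum>l'\<in>?S. alpha N k l * alpha N k' l' *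
        ((if k = k' then charfun_vec M X (s - s') else charfun_vec M X s * cnj (charfun_vec M X s')) *
        (if l = l' then charfun_vec M Y (t - t') else charfun_vec M Y t * cnj (charfun_vec M Y t'))))"
      by (intro sum.cong refl) (simp only: Tval)
    also have "\<dots> = (of_nat (N - 1) / of_nat N ^ 2) *
      (charfun_vec M X (s - s') - charfun_vec M X s * cnj (charfun_vec M X s')) *
      (charfun_vec M Y (t - t') - charfun_vec M Y t * cnj (charfun_vec M Y t'))" by (rule alg[OF N])
    finally show ?thesis .
  qed
qed

end
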